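(* Let $n$ be a non-zero integer, taken in canonical form. Then $n+(-n)\triangleq 1+(-1)\cong\{-1\mid 1\}$.
   Context: Games are short normal-play combinatorial games, written $G\cong\{L(G)\mid R(G)\}$, $\cong$ meaning identical literal forms. Canonical integers: $0\cong\{\ \mid\ \}$, $n\cong\{n-1\mid\ \}$ for $n>0$, $n\cong\{\ \mid n+1\}$ for $n<0$. Disjunctive sum $G+H\cong\{L(G)+H,G+L(H)\mid R(G)+H,G+R(H)\}$, negation $-G\cong\{-R(G)\mid -L(G)\}$. Equivalence modulo domination: $G\triangleq H$ means that in $G+(-H)$, for every move by either player as first player in one summand, the other player has a response in the other summand after which the responder wins. *)

theory Defs
  imports "HOL-Library.FSet"
begin

text \<open>Short games as literal forms: a game is a pair of finite sets of Left and Right options.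
  Identity of literal forms is HOL equality on this datatype.\<close>
datatype game = Game (lopts: "game fset") (ropts: "game fset")

primrec neg :: "game \<Rightarrow> game" where
  "neg (Game L R) = Game (fimage neg R) (fimage neg L)"

lemma size_fset_mem_le: "x |\<in>| X \<Longrightarrow> size x < size_fset size X"
  by (simp add: sum.remove[of "fset X" x] less_Suc_eq_le)

function (sequential) gsum :: "game \<Rightarrow> game \<Rightarrow> game" where
  "gsum (Game GL GR) (Game HL HR) =
     Game ((\<lambda>x. gsum x (Game HL HR)) |`| GL |\<union>| (\<lambda>y. gsum (Game GL GR) y) |`| HL)
          ((\<lambda>x. gsum x (Game HL HR)) |`| GR |\<union>| (\<lambda>y. gsum (Game GL GR) y) |`| HR)"
  by pat_completeness auto
termination
  by (relation "measure (\<lambda>(g, h). size g + size h)")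
     (auto dest!: size_fset_mem_le)

fun nat_game :: "nat \<Rightarrow> game" where
  "nat_game 0 = Game {||} {||}"
| "nat_game (Suc k) = Game {|nat_game k|} {||}"

fun negnat_game :: "nat \<Rightarrow> game" where
  "negnat_game 0 = Game {||} {||}"
| "negnat_game (Suc k) = Game {||} {|negnat_game k|}"

definition int_game :: "int \<Rightarrow> game" where
  "int_game n = (if n \<ge> 0 then nat_game (nat n) else negnat_game (nat (- n)))"

text \<open>Normal play outcomes.  lwins_first G: Left, moving first in G, has a winning strategy;
  lwins_second G: Left wins when Right moves first (the player unable to move loses).\<close>
inductive lwins_first :: "game \<Rightarrow> bool" and lwins_second :: "game \<Rightarrow> bool" where
  "GL |\<in>| lopts G \<Longrightarrow> lwins_second GL \<Longrightarrow> lwins_first G"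
| "(\<forall>GR. GR |\<in>| ropts G \<longrightarrow> lwins_first GR) \<Longrightarrow> lwins_second G"

inductive rwins_first :: "game \<Rightarrow> bool" and rwins_second :: "game \<Rightarrow> bool" where
  "GR |\<in>| ropts G \<Longrightarrow> rwins_second GR \<Longrightarrow> rwins_first G"
| "(\<forall>GL. GL |\<in>| lopts G \<longrightarrow> rwins_first GL) \<Longrightarrow> rwins_second G"

text \<open>Equivalence modulo domination G \<triangleq> H: in G + (-H), every first move by either player in one
  summand has an answer by the other player in the other summand after which the responder
  (now moving second) wins.  Left options of -H are -(H^R), Right options of -H are -(H^L).\<close>
definition dom_equiv :: "game \<Rightarrow> game \<Rightarrow> bool" where
  "dom_equiv G H \<longleftrightarrow>
     (\<forall>GL. GL |\<in>| lopts G \<longrightarrow> (\<exists>HL. HL |\<in>| lopts H \<and> rwins_second (gsum GL (neg HL)))) \<and>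
     (\<forall>HR. HR |\<in>| ropts H \<longrightarrow> (\<exists>GR. GR |\<in>| ropts G \<and> rwins_second (gsum GR (neg HR)))) \<and>
     (\<forall>GR. GR |\<in>| ropts G \<longrightarrow> (\<exists>HR. HR |\<in>| ropts H \<and> lwins_second (gsum GR (neg HR)))) \<and>
     (\<forall>HL. HL |\<in>| lopts H \<longrightarrow> (\<exists>GL. GL |\<in>| lopts G \<and> lwins_second (gsum GL (neg HL))))"

end

theory Submission imports Defs begin

lemma size_lopt: "x |\<in>| lopts G \<Longrightarrow> size x < size G"
  by (cases G) (auto dest: size_fset_mem_le)
lemma size_ropt: "x |\<in>| ropts G \<Longrightarrow> size x < size G"
  by (cases G) (auto dest: size_fset_mem_le)

lemma lopts_int: "lopts (int_game k) = (if k > 0 then {|int_game (k-1)|} else {||})"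
proof (cases "k > 0")
  case True
  then have "nat k = Suc (nat (k-1))" by simp
  then show ?thesis using True by (simp add: int_game_def)
next
  case False
  then show ?thesis
  proof (cases "k = 0")
    case False2: False
    with False have "nat (-k) = Suc (nat (-k-1))" by simp
    then show ?thesis using False False2 by (simp add: int_game_def)
  qed (simp add: int_game_def)
qed

lemma ropts_int: "ropts (int_game k) = (if k < 0 then {|int_game (k+1)|} else {||})"
proof (cases "k < 0")
  case True
  then have "nat (-k) = Suc (nat (-(k+1)))" by simp
  then show ?thesis using True by (simp add: int_game_def)
next
  case False
  then show ?thesis
  proof (cases "k = 0")
    case False2: False
    with False have "nat k = Suc (nat (k-1))" by simp
    then show ?thesis using False False2 by (simp add: int_game_def)
  qed (simp add: int_game_def)
qed

lemma neg_nat: "neg (nat_game m) = negnat_game m" "neg (negnat_game m) = nat_game m"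
  by (induction m) auto

lemma neg_int: "neg (int_game k) = int_game (-k)"
  by (auto simp: int_game_def neg_nat)

lemma lopts_gsum: "lopts (gsum A B) = (\<lambda>x. gsum x B) |`| lopts A |\<union>| (\<lambda>y. gsum A y) |`| lopts B"
  by (cases A; cases B) simp
lemma ropts_gsum: "ropts (gsum A B) = (\<lambda>x. gsum x B) |`| ropts A |\<union>| (\<lambda>y. gsum A y) |`| ropts B"
  by (cases A; cases B) simp

inductive isum :: "game \<Rightarrow> int \<Rightarrow> bool" where
  "isum (int_game k) k"
| "isum A a \<Longrightarrow> isum B b \<Longrightarrow> isum (gsum A B) (a + b)"

lemma isum_props:
  assumes "isum G v"
  shows "(\<forall>x. x |\<in>| lopts G \<longrightarrow> isum x (v - 1)) \<and> (\<forall>x. x |\<in>| ropts G \<longrightarrow> isum x (v + 1))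
    \<and> (v > 0 \<longrightarrow> (\<exists>x. x |\<in>| lopts G)) \<and> (v < 0 \<longrightarrow> (\<exists>x. x |\<in>| ropts G))"
  using assms
proof induction
  case (1 k)
  then show ?case by (auto simp: lopts_int ropts_int intro: isum.intros)
next
  case (2 A a B b)
  have l: "isum x (a + b - 1)" if "x |\<in>| lopts (gsum A B)" for x
  proof -
    from that consider y where "y |\<in>| lopts A" "x = gsum y B" | y where "y |\<in>| lopts B" "x = gsum A y"
      by (auto simp: lopts_gsum)
    then show ?thesis
    proof cases
      case 1 then show ?thesis using 2 isum.intros(2)[of y "a-1" B b] by (auto simp: algebra_simps)
    next
      case 3: 2 then show ?thesis using 2 isum.intros(2)[of A a y "b-1"] by (auto simp: algebra_simps)
    qed
  qed
  have r: "isum x (a + b + 1)" if "x |\<in>| ropts (gsum A B)" for x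
  proof -
    from that consider y where "y |\<in>| ropts A" "x = gsum y B" | y where "y |\<in>| ropts B" "x = gsum A y"
      by (auto simp: ropts_gsum)
    then show ?thesis
    proof cases
      case 1 then show ?thesis using 2 isum.intros(2)[of y "a+1" B b] by (auto simp: algebra_simps)
    next
      case 3: 2 then show ?thesis using 2 isum.intros(2)[of A a y "b+1"] by (auto simp: algebra_simps)
    qed
  qed
  have "a + b > 0 \<Longrightarrow> \<exists>x. x |\<in>| lopts (gsum A B)"
  proof -
    assume "a + b > 0"
    then have "a > 0 \<or> b > 0" by arith
    then show ?thesis using 2 by (auto simp: lopts_gsum)
  qed
  moreover have "a + b < 0 \<Longrightarrow> \<exists>x. x |\<in>| ropts (gsum A B)"
  proof -
    assume "a + b < 0"
    then have "a < 0 \<or> b < 0" by arith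
    then show ?thesis using 2 by (auto simp: ropts_gsum)
  qed
  ultimately show ?case using l r by blast
qed

lemma isum_wins:
  "isum G v \<Longrightarrow> (0 \<le> v \<longrightarrow> lwins_second G) \<and> (1 \<le> v \<longrightarrow> lwins_first G)
     \<and> (v \<le> 0 \<longrightarrow> rwins_second G) \<and> (v \<le> -1 \<longrightarrow> rwins_first G)"
proof (induction G arbitrary: v rule: measure_induct_rule[of size])
  case (less G)
  note P = isum_props[OF less.prems]
  have A: "1 \<le> v \<longrightarrow> lwins_first G"
  proof
    assume "1 \<le> v"
    then obtain x where x: "x |\<in>| lopts G" using P by auto
    then have "isum x (v - 1)" using P by auto
    then have "lwins_second x" using less.IH[OF size_lopt[OF x]] \<open>1 \<le> v\<close> by auto
    then show "lwins_first G" using x by (auto intro: lwins_first_lwins_second.intros)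
  qed
  have B: "v \<le> -1 \<longrightarrow> rwins_first G"
  proof
    assume "v \<le> -1"
    then obtain x where x: "x |\<in>| ropts G" using P by auto
    then have "isum x (v + 1)" using P by auto
    then have "rwins_second x" using less.IH[OF size_ropt[OF x]] \<open>v \<le> -1\<close> by auto
    then show "rwins_first G" using x by (auto intro: rwins_first_rwins_second.intros)
  qed
  have C: "0 \<le> v \<longrightarrow> lwins_second G"
  proof
    assume v: "0 \<le> v"
    have "lwins_first x" if x: "x |\<in>| ropts G" for x
    proof -
      have "isum x (v + 1)" using P x by auto
      then show ?thesis using less.IH[OF size_ropt[OF x]] v by auto
    qed
    then show "lwins_second G" by (auto intro: lwins_first_lwins_second.intros)
  qed
  have D: "v \<le> 0 \<longrightarrow> rwins_second G"
  proof
    assume v: "v \<le> 0"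
    have "rwins_first x" if x: "x |\<in>| lopts G" for x
    proof -
      have "isum x (v - 1)" using P x by auto
      then show ?thesis using less.IH[OF size_lopt[OF x]] v by auto
    qed
    then show "rwins_second G" by (auto intro: rwins_first_rwins_second.intros)
  qed
  show ?case using A B C D by blast
qed

lemma both_win: "isum G 0 \<Longrightarrow> lwins_second G \<and> rwins_second G"
  using isum_wins by auto

lemma H_eq: "gsum (int_game 1) (neg (int_game 1)) = Game {|int_game (-1)|} {|int_game 1|}"
  by (simp add: int_game_def)

theorem lemma3p1:
  fixes n :: int
  assumes "n \<noteq> 0"
  shows "dom_equiv (gsum (int_game n) (neg (int_game n))) (gsum (int_game 1) (neg (int_game 1)))
       \<and> gsum (int_game 1) (neg (int_game 1)) = Game {|int_game (-1)|} {|int_game 1|}"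
proof -
  let ?G = "gsum (int_game n) (int_game (-n))"
  have iG: "isum ?G 0" using isum.intros(2)[OF isum.intros(1) isum.intros(1), of n "-n"] by simp
  note PG = isum_props[OF iG]
  have lex: "\<exists>x. x |\<in>| lopts ?G" and rex: "\<exists>x. x |\<in>| ropts ?G"
    using assms by (cases "n > 0"; auto simp: lopts_gsum ropts_gsum lopts_int ropts_int)+
  have n1: "neg (int_game 1) = int_game (-1)" "neg (int_game (-1)) = int_game 1" by (simp_all add: neg_int)
  have w1: "lwins_second (gsum x (int_game 1)) \<and> rwins_second (gsum x (int_game 1))" if "x |\<in>| lopts ?G" for x
    using that PG both_win isum.intros(2)[of x "-1" "int_game 1" 1] isum.intros(1)[of 1] by auto
  have w2: "lwins_second (gsum x (int_game (-1))) \<and> rwins_second (gsum x (int_game (-1)))" if "x |\<in>| ropts ?G" for x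
    using that PG both_win isum.intros(2)[of x "1" "int_game (-1)" "-1"] isum.intros(1)[of "-1"] by auto
  show ?thesis
    unfolding H_eq dom_equiv_def neg_int[of n]
    using lex rex w1 w2 n1 by auto
qed
end
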